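(* Let $F'_Y\le F_Y$ and $F_Z$ be distribution functions, $K=F_Y+F_Z-F_YF_Z$, $K'=F'_Y+F_Z-F'_YF_Z$, and let $\chi'$ and $\chi$ be the canonical maxmin generators of $(F'_Y,F_Z)$ and $(F_Y,F_Z)$ respectively. Then $\chi'\le\chi$ pointwise on $[0,1]$.
   Context: A distribution function is a non-decreasing map $F:\mathbb R\to[0,1]$ (no right-continuity assumed) with limits $0$ at $-\infty$ and $1$ at $+\infty$; $f(y\pm)$ are one-sided limits. The canonical maxmin generator $\chi$ of $(F_Y,F_Z)$, with $K=F_Y+F_Z-F_YF_Z$: $\chi(0)=0$, $\chi(1)=1$, and for $w\in(0,1)$ choose $y_0$ with $K(y_0-)\le w\le K(y_0+)$, let $w_-=K(y_0-)$, $w_l=F_Y(y_0-)+F_Z(y_0)-F_Y(y_0-)F_Z(y_0)$, $w_u=F_Y(y_0+)+F_Z(y_0)-F_Y(y_0+)F_Z(y_0)$, $w_+=K(y_0+)$, and $\chi(w)=F_Y(y_0-)$ on $[w_-,w_l]$, $\chi(w)=\frac{w-F_Z(y_0)}{1-F_Z(y_0)}$ on $[w_l,w_u]$, $\chi(w)=F_Y(y_0+)$ on $[w_u,w_+]$. *)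

theory Defs
  imports "HOL-Analysis.Analysis"
begin

definition left_lim :: "(real \<Rightarrow> real) \<Rightarrow> real \<Rightarrow> real" where
  "left_lim f y = Lim (at_left y) f"

definition right_lim :: "(real \<Rightarrow> real) \<Rightarrow> real \<Rightarrow> real" where
  "right_lim f y = Lim (at_right y) f"

text \<open>Distribution function: non-decreasing, values in [0,1], limits 0 and 1 at
  minus/plus infinity; no right-continuity assumed.\<close>
definition distribution_function :: "(real \<Rightarrow> real) \<Rightarrow> bool" where
  "distribution_function F \<longleftrightarrow> mono F \<and> (\<forall>y. 0 \<le> F y \<and> F y \<le> 1)
     \<and> (F \<longlongrightarrow> 0) at_bot \<and> (F \<longlongrightarrow> 1) at_top"

definition maxmin_K :: "(real \<Rightarrow> real) \<Rightarrow> (real \<Rightarrow> real) \<Rightarrow> real \<Rightarrow> real" where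
  "maxmin_K FY FZ = (\<lambda>y. FY y + FZ y - FY y * FZ y)"

definition canonical_generator :: "(real \<Rightarrow> real) \<Rightarrow> (real \<Rightarrow> real) \<Rightarrow> real \<Rightarrow> real" where
  "canonical_generator FY FZ w =
     (if w = 0 then 0 else if w = 1 then 1 else
      (let K = maxmin_K FY FZ;
           y0 = (SOME y. left_lim K y \<le> w \<and> w \<le> right_lim K y);
           wl = left_lim FY y0 + FZ y0 - left_lim FY y0 * FZ y0;
           wu = right_lim FY y0 + FZ y0 - right_lim FY y0 * FZ y0
       in if w \<le> wl then left_lim FY y0
          else if w \<le> wu then (w - FZ y0) / (1 - FZ y0)
          else right_lim FY y0))"

end

theory Submission
  imports Defs
begin

locale dfun = fixes F :: "real \<Rightarrow> real"
  assumes mo: "mono F" and ge0: "\<And>y. 0 \<le> F y" and le1: "\<And>y. F y \<le> 1"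
begin

lemma ll_tendsto_Sup: "(F \<longlongrightarrow> Sup (F ` {..<y})) (at_left y)"
proof -
  have "(F \<longlongrightarrow> Sup (F ` ({..<y} \<inter> UNIV))) (at y within ({..<y} \<inter> UNIV))"
    by (rule Lim_left_bound[where K=1]) (auto intro: le1 monoD[OF mo])
  then show ?thesis by simp
qed

lemma rl_tendsto_Inf: "(F \<longlongrightarrow> Inf (F ` {y<..})) (at_right y)"
proof -
  have "(F \<longlongrightarrow> Inf (F ` ({y<..} \<inter> UNIV))) (at y within ({y<..} \<inter> UNIV))"
    by (rule Lim_right_bound[where K=0]) (auto intro: ge0 monoD[OF mo])
  then show ?thesis by simp
qed

lemma ll_Sup: "left_lim F y = Sup (F ` {..<y})"
  unfolding left_lim_def by (rule tendsto_Lim[OF _ ll_tendsto_Sup]) simp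

lemma rl_Inf: "right_lim F y = Inf (F ` {y<..})"
  unfolding right_lim_def by (rule tendsto_Lim[OF _ rl_tendsto_Inf]) simp

lemma ll_tendsto: "(F \<longlongrightarrow> left_lim F y) (at_left y)"
  using ll_tendsto_Sup ll_Sup by simp

lemma rl_tendsto: "(F \<longlongrightarrow> right_lim F y) (at_right y)"
  using rl_tendsto_Inf rl_Inf by simp

lemma bddA: "bdd_above (F ` S)" by (rule bdd_aboveI[where M=1]) (auto intro: le1)
lemma bddB: "bdd_below (F ` S)" by (rule bdd_belowI[where m=0]) (auto intro: ge0)

lemma ll_le: "left_lim F y \<le> F y"
  unfolding ll_Sup
  by (rule cSup_least) (auto intro: monoD[OF mo] exI[of _ "y-1"])

lemma le_ll: "x < y \<Longrightarrow> F x \<le> left_lim F y"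
  unfolding ll_Sup by (rule cSup_upper) (auto intro: bddA)

lemma le_rl: "F y \<le> right_lim F y"
  unfolding rl_Inf
  by (rule cInf_greatest) (auto intro: monoD[OF mo] exI[of _ "y+1"])

lemma rl_le: "y < x \<Longrightarrow> right_lim F y \<le> F x"
  unfolding rl_Inf by (rule cInf_lower) (auto intro: bddB)

lemma ll_ge0: "0 \<le> left_lim F y"
  using le_ll[of "y-1" y] ge0[of "y-1"] by simp

lemma rl_le1: "right_lim F y \<le> 1"
  using rl_le[of y "y+1"] le1[of "y+1"] by simp

lemma rl_le_ll: "x < y \<Longrightarrow> right_lim F x \<le> left_lim F y"
  using rl_le[of x "(x+y)/2"] le_ll[of "(x+y)/2" y] by simp

lemma ll_approx: "e > 0 \<Longrightarrow> \<exists>x<y. left_lim F y - e < F x"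
proof -
  assume "e > 0"
  then have "Sup (F ` {..<y}) - e < Sup (F ` {..<y})" by simp
  from less_cSupD[OF _ this] obtain v where "v \<in> F ` {..<y}" "Sup (F ` {..<y}) - e < v"
    by auto
  then show ?thesis unfolding ll_Sup by auto
qed

end

lemma rl_mono:
  assumes "dfun F" "dfun F'" "\<And>y. F' y \<le> F y"
  shows "right_lim F' y \<le> right_lim F y"
proof -
  have "Inf (F' ` {y<..}) \<le> Inf (F ` {y<..})"
  proof (rule cInf_greatest)
    show "F ` {y<..} \<noteq> {}" by auto
    fix v assume "v \<in> F ` {y<..}"
    then obtain t where t: "t > y" "v = F t" by auto
    have "Inf (F' ` {y<..}) \<le> F' t"
      by (rule cInf_lower) (use t dfun.bddB[OF assms(2)] in auto)
    then show "Inf (F' ` {y<..}) \<le> v" using assms(3)[of t] t by simp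
  qed
  then show ?thesis using dfun.rl_Inf[OF assms(1)] dfun.rl_Inf[OF assms(2)] by simp
qed


lemma K_dfun:
  assumes "dfun F" "dfun G"
  shows "dfun (maxmin_K F G)"
proof
  interpret f: dfun F by fact
  interpret g: dfun G by fact
  have e: "maxmin_K F G y = 1 - (1 - F y) * (1 - G y)" for y by (simp add: maxmin_K_def algebra_simps)
  show "mono (maxmin_K F G)"
  proof (rule monoI)
    fix a b :: real assume "a \<le> b"
    then have "(1 - F b) * (1 - G b) \<le> (1 - F a) * (1 - G a)"
      using monoD[OF f.mo \<open>a\<le>b\<close>] monoD[OF g.mo \<open>a\<le>b\<close>] f.le1 g.le1
      by (intro mult_mono) auto
    then show "maxmin_K F G a \<le> maxmin_K F G b" unfolding e by simp
  qed
  fix y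
  show "0 \<le> maxmin_K F G y" unfolding e using f.ge0[of y] g.ge0[of y] f.le1[of y] g.le1[of y]
    by (simp add: mult_le_one)
  show "maxmin_K F G y \<le> 1" unfolding e using f.ge0[of y] g.ge0[of y] f.le1[of y] g.le1[of y]
    by simp
qed

lemma K_ll:
  assumes "dfun F" "dfun G"
  shows "left_lim (maxmin_K F G) y = left_lim F y + left_lim G y - left_lim F y * left_lim G y"
  apply (subst left_lim_def)
  unfolding maxmin_K_def
  by (rule tendsto_Lim) (simp, intro tendsto_intros dfun.ll_tendsto assms)

lemma K_rl:
  assumes "dfun F" "dfun G"
  shows "right_lim (maxmin_K F G) y = right_lim F y + right_lim G y - right_lim F y * right_lim G y"
  apply (subst right_lim_def)
  unfolding maxmin_K_def
  by (rule tendsto_Lim) (simp, intro tendsto_intros dfun.rl_tendsto assms)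

lemma df_dfun: "distribution_function F \<Longrightarrow> dfun F"
  unfolding distribution_function_def by unfold_locales auto

lemma ex_y0:
  assumes "distribution_function F" "distribution_function G" "0 < w" "w < 1"
  shows "\<exists>y. left_lim (maxmin_K F G) y \<le> w \<and> w \<le> right_lim (maxmin_K F G) y"
proof -
  let ?K = "maxmin_K F G"
  interpret k: dfun ?K using K_dfun df_dfun assms(1,2) by blast
  have "(?K \<longlongrightarrow> 0 + 0 - 0 * 0) at_bot" unfolding maxmin_K_def
    by (intro tendsto_intros) (use assms(1,2) in \<open>auto simp: distribution_function_def\<close>)
  then have "eventually (\<lambda>x. ?K x < w) at_bot" using assms(3) by (auto dest: order_tendstoD)
  then obtain N where N: "\<And>x. x \<le> N \<Longrightarrow> ?K x < w" by (auto simp: eventually_at_bot_linorder)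
  have "(?K \<longlongrightarrow> 1 + 1 - 1 * 1) at_top" unfolding maxmin_K_def
    by (intro tendsto_intros) (use assms(1,2) in \<open>auto simp: distribution_function_def\<close>)
  then have "eventually (\<lambda>x. w < ?K x) at_top" using assms(4) by (auto dest: order_tendstoD)
  then obtain M where M: "\<And>x. x \<ge> M \<Longrightarrow> w < ?K x" by (auto simp: eventually_at_top_linorder)
  define S where "S = {x. ?K x < w}"
  have ne: "S \<noteq> {}" using N[of N] S_def by auto
  have bdd: "bdd_above S" unfolding S_def
    by (rule bdd_aboveI[where M=M]) (use M in \<open>metis less_asym mem_Collect_eq nle_le\<close>)
  define y where "y = Sup S"
  have "left_lim ?K y \<le> w" unfolding k.ll_Sup
  proof (rule cSup_least)
    show "?K ` {..<y} \<noteq> {}" by auto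
    fix v assume "v \<in> ?K ` {..<y}"
    then obtain t where t: "t < y" "v = ?K t" by auto
    then obtain s where "s \<in> S" "t < s" using less_cSupD[OF ne] y_def by blast
    then show "v \<le> w" using t monoD[OF k.mo, of t s] S_def by auto
  qed
  moreover have "w \<le> right_lim ?K y" unfolding k.rl_Inf
  proof (rule cInf_greatest)
    show "?K ` {y<..} \<noteq> {}" by auto
    fix v assume "v \<in> ?K ` {y<..}"
    then obtain t where t: "t > y" "v = ?K t" by auto
    then have "t \<notin> S" using cSup_upper[OF _ bdd] y_def by force
    then show "w \<le> v" using t S_def by auto
  qed
  ultimately show ?thesis by blast
qed


lemma chi_props:
  assumes dF: "dfun F" and dG: "dfun G" and w: "0 < w" "w < 1"
    and ex: "\<exists>y. left_lim (maxmin_K F G) y \<le> w \<and> w \<le> right_lim (maxmin_K F G) y"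
  shows "(\<forall>y. min (right_lim F y) ((w - G y) / (1 - G y)) \<le> canonical_generator F G w)
    \<and> (\<forall>e>0. \<exists>y. canonical_generator F G w - e < min (right_lim F y) ((w - G y) / (1 - G y)))"
proof -
  interpret f: dfun F by fact
  interpret g: dfun G by fact
  define y0 where "y0 = (SOME y. left_lim (maxmin_K F G) y \<le> w \<and> w \<le> right_lim (maxmin_K F G) y)"
  have hy0: "left_lim (maxmin_K F G) y0 \<le> w" "w \<le> right_lim (maxmin_K F G) y0"
    using someI_ex[OF ex] unfolding y0_def by auto
  define a where "a = left_lim F y0"
  define b where "b = right_lim F y0"
  define z where "z = G y0"
  define zl where "zl = left_lim G y0"
  define zr where "zr = right_lim G y0"
  define wl where "wl = a + z - a * z"
  define wu where "wu = b + z - b * z"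
  define c where "c = (w - z) / (1 - z)"
  have chi: "canonical_generator F G w = (if w \<le> wl then a else if w \<le> wu then c else b)"
    using w unfolding canonical_generator_def Let_def y0_def[symmetric] a_def b_def z_def wl_def wu_def c_def
    by simp
  have Kl: "a + zl - a * zl \<le> w" using hy0(1) K_ll[OF dF dG] a_def zl_def by simp
  have Kr: "w \<le> b + zr - b * zr" using hy0(2) K_rl[OF dF dG] b_def zr_def by simp
  have a0: "0 \<le> a" using f.ll_ge0 a_def by simp
  have ab: "a \<le> b" using f.ll_le[of y0] f.le_rl[of y0] a_def b_def by simp
  have b1: "b \<le> 1" using f.rl_le1 b_def by simp
  have z0: "0 \<le> zl" using g.ll_ge0 zl_def by simp
  have zlz: "zl \<le> z" using g.ll_le zl_def z_def by simp
  have zzr: "z \<le> zr" using g.le_rl zl_def z_def zr_def by simp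
  have zr1: "zr \<le> 1" using g.rl_le1 zr_def by simp
  have mid: "a \<le> c \<and> c \<le> b \<and> z < 1" if "wl < w" "w \<le> wu"
  proof -
    have z1: "z < 1" proof (rule ccontr)
      assume "\<not> z < 1" then have "z = 1" using zzr zr1 by simp
      then show False using that w wl_def by simp
    qed
    have "a * (1 - z) \<le> w - z" using that wl_def by (simp add: algebra_simps)
    then have "a \<le> c" unfolding c_def using z1 by (simp add: pos_le_divide_eq)
    moreover have "w - z \<le> b * (1 - z)" using that wu_def by (simp add: algebra_simps)
    then have "c \<le> b" unfolding c_def using z1 by (simp add: pos_divide_le_eq)
    ultimately show ?thesis using z1 by simp
  qed
  have ca: "c * (1 - z) = w - z" if "z < 1" using that unfolding c_def by simp
  have chia: "a \<le> canonical_generator F G w" using mid ab chi by auto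
  have part1: "min (right_lim F y) ((w - G y) / (1 - G y)) \<le> canonical_generator F G w" for y
  proof (cases y y0 rule: linorder_cases)
    case less
    then have "right_lim F y \<le> a" using f.rl_le_ll a_def by simp
    then show ?thesis using chia by simp
  next
    case equal
    show ?thesis
    proof (cases "w \<le> wl")
      case True
      show ?thesis
      proof (cases "z = 1")
        case True then show ?thesis using equal z_def chia a0 by simp
      next
        case False
        then have "z < 1" using zzr zr1 by simp
        moreover have "w - z \<le> a * (1 - z)" using True wl_def by (simp add: algebra_simps)
        ultimately have "(w - z) / (1 - z) \<le> a" by (simp add: pos_divide_le_eq)
        then show ?thesis using equal z_def chi True by simp
      qed
    next
      case False
      then show ?thesis using chi equal z_def c_def b_def by (cases "w \<le> wu") auto
    qed
  next
    case greater
    define Gy where "Gy = G y"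
    have zrG: "zr \<le> Gy" using g.rl_le greater zr_def Gy_def by simp
    show ?thesis
    proof (cases "Gy = 1")
      case True then show ?thesis using Gy_def chia a0 by simp
    next
      case False
      then have G1: "Gy < 1" using g.le1 Gy_def by (simp add: order_less_le)
      have "(w - Gy) / (1 - Gy) \<le> canonical_generator F G w"
      proof (cases "w \<le> wl")
        case True
        have "(1 - a) * z \<le> (1 - a) * Gy" using ab b1 zzr zrG by (intro mult_left_mono) auto
        then have "w - Gy \<le> a * (1 - Gy)" using True wl_def by (simp add: algebra_simps)
        then show ?thesis using G1 chi True by (simp add: pos_divide_le_eq)
      next
        case nwl: False
        show ?thesis
        proof (cases "w \<le> wu")
          case True
          note m = mid[OF _ True] nwl
          have "(1 - c) * z \<le> (1 - c) * Gy" using m zzr zrG by (intro mult_left_mono) (use b1 in auto)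
          moreover have "w = c + z * (1 - c)" using ca[of] m by (simp add: algebra_simps)
          ultimately have "w - Gy \<le> c * (1 - Gy)" by (simp add: algebra_simps)
          then show ?thesis using G1 chi True nwl by (simp add: pos_divide_le_eq)
        next
          case False
          have "(1 - b) * zr \<le> (1 - b) * Gy" using b1 zrG by (intro mult_left_mono) auto
          then have "w - Gy \<le> b * (1 - Gy)" using Kr by (simp add: algebra_simps)
          then show ?thesis using G1 chi False nwl by (simp add: pos_divide_le_eq)
        qed
      qed
      then show ?thesis using Gy_def by simp
    qed
  qed
  have part2: "\<exists>y. canonical_generator F G w - e < min (right_lim F y) ((w - G y) / (1 - G y))"
    if e: "e > 0" for e
  proof (cases "w \<le> wl")
    case True
    have zl1: "zl < 1"
    proof (rule ccontr)
      assume "\<not> zl < 1" then have "zl = 1" using zlz zzr zr1 by simp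
      then show False using Kl w by simp
    qed
    obtain x where x: "x < y0" "a - e < F x" using f.ll_approx[OF e] a_def by blast
    have Gx: "G x \<le> zl" using g.le_ll x zl_def by simp
    have "(1 - a) * G x \<le> (1 - a) * zl" using Gx ab b1 by (intro mult_left_mono) auto
    then have "a * (1 - G x) \<le> w - G x" using Kl by (simp add: algebra_simps)
    then have "a \<le> (w - G x) / (1 - G x)" using Gx zl1 by (simp add: pos_le_divide_eq)
    moreover have "a - e < right_lim F x" using x f.le_rl[of x] by simp
    ultimately show ?thesis using chi True e by (intro exI[of _ x]) simp
  next
    case nwl: False
    show ?thesis
    proof (cases "w \<le> wu")
      case True
      note m = mid[OF _ True] nwl
      then show ?thesis using chi True nwl e b_def z_def c_def by (intro exI[of _ y0]) simp
    next
      case False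
      have z1: "z < 1"
      proof (rule ccontr)
        assume "\<not> z < 1" then have "z = 1" using zzr zr1 by simp
        then show False using False w wu_def by simp
      qed
      have "b * (1 - z) < w - z" using False wu_def by (simp add: algebra_simps)
      then have "b < c" unfolding c_def using z1 by (simp add: pos_less_divide_eq)
      then show ?thesis using chi False nwl e b_def z_def c_def by (intro exI[of _ y0]) simp
    qed
  qed
  show ?thesis using part1 part2 by blast
qed


theorem lemma2:
  fixes FY' FY FZ :: "real \<Rightarrow> real"
  assumes "distribution_function FY'"
    and "distribution_function FY"
    and "distribution_function FZ"
    and "\<And>y. FY' y \<le> FY y"
  shows "\<forall>w\<in>{0..1}. canonical_generator FY' FZ w \<le> canonical_generator FY FZ w"
proof
  fix w :: real assume w01: "w \<in> {0..1}"
  show "canonical_generator FY' FZ w \<le> canonical_generator FY FZ w"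
  proof (cases "w = 0 \<or> w = 1")
    case True then show ?thesis unfolding canonical_generator_def by auto
  next
    case False
    then have w: "0 < w" "w < 1" using w01 by auto
    have d': "dfun FY'" and d: "dfun FY" and dz: "dfun FZ" using assms df_dfun by auto
    note P' = chi_props[OF d' dz w ex_y0[OF assms(1,3) w]]
    note P = chi_props[OF d dz w ex_y0[OF assms(2,3) w]]
    show ?thesis
    proof (rule ccontr)
      assume "\<not> ?thesis"
      then have "canonical_generator FY' FZ w - canonical_generator FY FZ w > 0" by simp
      then obtain y where y: "canonical_generator FY' FZ w - (canonical_generator FY' FZ w - canonical_generator FY FZ w)
          < min (right_lim FY' y) ((w - FZ y) / (1 - FZ y))" using P' by blast
      have "right_lim FY' y \<le> right_lim FY y" using rl_mono[OF d d' assms(4)] .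
      then have "min (right_lim FY' y) ((w - FZ y) / (1 - FZ y)) \<le> canonical_generator FY FZ w"
        using P by (meson min.mono order_refl order_trans)
      then show False using y by simp
    qed
  qed
qed

end
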